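(* Consider the remote-estimation Markov decision process described in the context. The optimal policy $\pi^*$, if it exists (as a stationary deterministic policy attaining the minimum in the Bellman equation $\mathcal{L}^*+h(s)=\min_{a\in\{0,1\}}\{l(s,a)+\sum_{s'}P_{s,s'}(a)h(s')\}$), exhibits a switching structure: for each estimation error $(i,j)$, $i\ne j$, there is a threshold $\tau^*_{i,j}\in\{1,2,\dots\}\cup\{\infty\}$ such that for $s=(i,j,\delta)$, $$\pi^*(s)=\begin{cases}1,&\delta\ge\tau^*_{i,j},\\0,&\text{otherwise,}\end{cases}$$ and $\pi^*(s)=0$ for synced states $s=(i,i,0)$. Here $\tau^*_{i,j}=1$ means always transmitting in error $(i,j)$ and $\tau^*_{i,j}=\infty$ means never transmitting.
   Context: Model. A source $\{X_t\}_{t\ge1}$ is a homogeneous discrete-time Markov chain on $\mathcal{X}=\{1,\dots,M\}$ with irreducible transition matrix $Q=(Q_{i,j})$. Let $\mathcal{X}_{\rm ap}=\{i: Q_{i,i}>0\}$, $\mathcal{X}_{\rm p}=\mathcal{X}\setminus\mathcal{X}_{\rm ap}$; assume $\mathcal{X}_{\rm ap}\ne\emptyset$. At each time $t$ a sensor chooses $A_t\in\{0,1\}$ (1 = transmit). The channel is i.i.d. Bernoulli $H_t$ with $\Pr[H_t=1]=p_s$, $p_f=1-p_s$, independent of the source. The estimate evolves as $\hat X_{t+1}=X_t$ if $A_t=1,H_t=1$, else $\hat X_{t+1}=\hat X_t$. The AoCE is $\Delta_t=\Delta_{t-1}+1$ if $X_t\ne\hat X_t$ and $(X_t,\hat X_t)=(X_{t-1},\hat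 X_{t-1})$; $\Delta_t=1$ if $X_t\ne\hat X_t$ and $(X_t,\hat X_t)\ne(X_{t-1},\hat X_{t-1})$; $\Delta_t=0$ if $X_t=\hat X_t$. State $S_t=(X_t,\hat X_t,\Delta_t)$ with state space $\mathcal{S}=\{(i,i,0)\}\cup\{(i,j,\delta): i\ne j,i\in\mathcal{X}_{\rm ap},\delta\ge1\}\cup\{(i,j,1):i\ne j,i\in\mathcal{X}_{\rm p}\}$. Transition probabilities $P_{s,s'}(a)$: for $s=(i,j,\delta)$, $i\ne j$, under $a=0$: to $(i,j,\delta+1)$ w.p. $Q_{i,i}$, to $(j,j,0)$ w.p. $Q_{i,j}$, to $(k,j,1)$ w.p. $Q_{i,k}$ ($k\ne i,j$); under $a=1$: to $(i,i,0)$ w.p. $Q_{i,i}p_s$, to $(k,i,1)$ w.p. $Q_{i,k}p_s$ ($k\ne i$), to $(i,j,\delta+1)$ w.p. $Q_{i,i}p_f$, to $(j,j,0)$ w.p. $Q_{i,j}p_f$, to $(k,j,1)$ w.p. $Q_{i,k}p_f$ ($k\ne i,j$). For $s=(i,i,0)$ and any $a$: to $(i,i,0)$ w.p. $Q_{i,i}$, to $(k,i,1)$ w.p. $Q_{i,k}$ ($k\ne i$). Costs: constants $D_{i,j}>0$ for $i\ne j$ and non-negative, non-decreasing, possibly unbounded age functions $g_{i,j}$; $c(i,j,\delta)=D_{i,j}g_{i,j}(\delta)$ for $i\ne j$, $c(i,i,0)=0$; per-stage cost $l(s,a)=c(s)+\lambda\mathbb{1}\{a\ne0\}$ with $\lambda\ge0$.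 A policy chooses $A_t$ as a (possibly randomized) function of the history $(X_{1:t},\hat X_{1:t},A_{1:t-1})$; average cost $\mathcal{L}(\pi)=\limsup_{T\to\infty}\frac1T\sum_{t=1}^T\mathbb{E}^\pi[l(S_t,A_t)\mid S_1=s_1]$; a policy is optimal if it attains $\mathcal{L}^*=\inf_\pi\mathcal{L}(\pi)$. *)

theory Defs
  imports "HOL-Analysis.Analysis"
begin

text \<open>Remote-estimation MDP.  Source alphabet X = {1..M}; a state is a triple
  (X_t, hat X_t, Delta_t) of type nat * nat * nat; actions are bool (True = transmit, a = 1).\<close>

type_synonym rstate = "nat \<times> nat \<times> nat"

definition Xset :: "nat \<Rightarrow> nat set" where
  "Xset M = {1..M}"

definition Xap :: "nat \<Rightarrow> (nat \<Rightarrow> nat \<Rightarrow> real) \<Rightarrow> nat set" where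
  "Xap M Q = {i \<in> Xset M. Q i i > 0}"

definition Xp :: "nat \<Rightarrow> (nat \<Rightarrow> nat \<Rightarrow> real) \<Rightarrow> nat set" where
  "Xp M Q = Xset M - Xap M Q"

definition Sspace :: "nat \<Rightarrow> (nat \<Rightarrow> nat \<Rightarrow> real) \<Rightarrow> rstate set" where
  "Sspace M Q =
     {(i, i, 0) | i. i \<in> Xset M}
   \<union> {(i, j, d) | i j d. i \<noteq> j \<and> i \<in> Xap M Q \<and> j \<in> Xset M \<and> d \<ge> 1}
   \<union> {(i, j, 1) | i j. i \<noteq> j \<and> i \<in> Xp M Q \<and> j \<in> Xset M}"

text \<open>One step of the source starting from X_t = i when the estimate becomes i
  (synced state, or successful transmission): to (i,i,0) w.p. Q i i, to (k,i,1) w.p. Q i k.\<close>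
definition sync_step :: "(nat \<Rightarrow> nat \<Rightarrow> real) \<Rightarrow> nat \<Rightarrow> rstate \<Rightarrow> real" where
  "sync_step Q i s' = (case s' of (i', j', d') \<Rightarrow>
     if j' = i then (if i' = i \<and> d' = 0 then Q i i
                     else if i' \<noteq> i \<and> d' = 1 then Q i i' else 0)
     else 0)"

definition idle_step :: "(nat \<Rightarrow> nat \<Rightarrow> real) \<Rightarrow> nat \<Rightarrow> nat \<Rightarrow> nat \<Rightarrow> rstate \<Rightarrow> real" where
  "idle_step Q i j d s' = (case s' of (i', j', d') \<Rightarrow>
     if j' = j then (if i' = i \<and> d' = d + 1 then Q i i
                     else if i' = j \<and> d' = 0 then Q i j
                     else if i' \<noteq> i \<and> i' \<noteq> j \<and> d' = 1 then Q i i' else 0)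
     else 0)"

definition trans :: "(nat \<Rightarrow> nat \<Rightarrow> real) \<Rightarrow> real \<Rightarrow> rstate \<Rightarrow> rstate \<Rightarrow> bool \<Rightarrow> real" where
  "trans Q ps s s' a = (case s of (i, j, d) \<Rightarrow>
     if i = j then sync_step Q i s'
     else if a then ps * sync_step Q i s' + (1 - ps) * idle_step Q i j d s'
     else idle_step Q i j d s')"

definition cost :: "(nat \<Rightarrow> nat \<Rightarrow> real) \<Rightarrow> (nat \<Rightarrow> nat \<Rightarrow> nat \<Rightarrow> real) \<Rightarrow> rstate \<Rightarrow> real" where
  "cost D g s = (case s of (i, j, d) \<Rightarrow> if i = j then 0 else D i j * g i j d)"

definition stage_cost ::
  "(nat \<Rightarrow> nat \<Rightarrow> real) \<Rightarrow> (nat \<Rightarrow> nat \<Rightarrow> nat \<Rightarrow> real) \<Rightarrow> real \<Rightarrow> rstate \<Rightarrow> bool \<Rightarrow> real" where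
  "stage_cost D g lam s a = cost D g s + (if a then lam else 0)"

text \<open>General (history-dependent, randomized) policies: given the past (state, action) pairs
  and the current state, the probability of transmitting.  The history of states
  S_1..S_t is in bijection with (X_{1:t}, hat X_{1:t}).\<close>
type_synonym policy = "(rstate \<times> bool) list \<Rightarrow> rstate \<Rightarrow> real"

definition valid_policy :: "policy \<Rightarrow> bool" where
  "valid_policy \<pi> \<longleftrightarrow> (\<forall>hist s. 0 \<le> \<pi> hist s \<and> \<pi> hist s \<le> 1)"

definition act_prob :: "policy \<Rightarrow> (rstate \<times> bool) list \<Rightarrow> rstate \<Rightarrow> bool \<Rightarrow> real" where
  "act_prob \<pi> hist s a = (if a then \<pi> hist s else 1 - \<pi> hist s)"

text \<open>exp_cost ... pi T hist s = expected sum of the next T stage costs, given history hist and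
  current state s.  With hist = [] and s = s_1 this is sum_{t=1}^T E^pi[l(S_t,A_t) | S_1 = s_1].\<close>
primrec exp_cost ::
  "nat \<Rightarrow> (nat \<Rightarrow> nat \<Rightarrow> real) \<Rightarrow> real \<Rightarrow> (nat \<Rightarrow> nat \<Rightarrow> real) \<Rightarrow> (nat \<Rightarrow> nat \<Rightarrow> nat \<Rightarrow> real)
   \<Rightarrow> real \<Rightarrow> policy \<Rightarrow> nat \<Rightarrow> (rstate \<times> bool) list \<Rightarrow> rstate \<Rightarrow> real" where
  "exp_cost M Q ps D g lam \<pi> 0 hist s = 0"
| "exp_cost M Q ps D g lam \<pi> (Suc T) hist s =
     (\<Sum>a\<in>UNIV. act_prob \<pi> hist s a *
        (stage_cost D g lam s a +
         (\<Sum>\<^sub>\<infinity>s'\<in>Sspace M Q. trans Q ps s s' a * exp_cost M Q ps D g lam \<pi> T (hist @ [(s, a)]) s')))"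

definition avg_cost ::
  "nat \<Rightarrow> (nat \<Rightarrow> nat \<Rightarrow> real) \<Rightarrow> real \<Rightarrow> (nat \<Rightarrow> nat \<Rightarrow> real) \<Rightarrow> (nat \<Rightarrow> nat \<Rightarrow> nat \<Rightarrow> real)
   \<Rightarrow> real \<Rightarrow> policy \<Rightarrow> rstate \<Rightarrow> ereal" where
  "avg_cost M Q ps D g lam \<pi> s1 =
     limsup (\<lambda>T. ereal (exp_cost M Q ps D g lam \<pi> T [] s1 / real T))"

definition opt_cost ::
  "nat \<Rightarrow> (nat \<Rightarrow> nat \<Rightarrow> real) \<Rightarrow> real \<Rightarrow> (nat \<Rightarrow> nat \<Rightarrow> real) \<Rightarrow> (nat \<Rightarrow> nat \<Rightarrow> nat \<Rightarrow> real)
   \<Rightarrow> real \<Rightarrow> rstate \<Rightarrow> ereal" where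
  "opt_cost M Q ps D g lam s1 =
     (INF \<pi> \<in> {\<pi>. valid_policy \<pi>}. avg_cost M Q ps D g lam \<pi> s1)"

definition Qval ::
  "nat \<Rightarrow> (nat \<Rightarrow> nat \<Rightarrow> real) \<Rightarrow> real \<Rightarrow> (nat \<Rightarrow> nat \<Rightarrow> real) \<Rightarrow> (nat \<Rightarrow> nat \<Rightarrow> nat \<Rightarrow> real)
   \<Rightarrow> real \<Rightarrow> (rstate \<Rightarrow> real) \<Rightarrow> rstate \<Rightarrow> bool \<Rightarrow> real" where
  "Qval M Q ps D g lam h s a =
     stage_cost D g lam s a + (\<Sum>\<^sub>\<infinity>s'\<in>Sspace M Q. trans Q ps s s' a * h s')"

text \<open>The stationary deterministic policy attaining the minimum in the Bellman equation,
  ties broken in favour of not transmitting: transmit iff strictly better.\<close>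
definition opt_action ::
  "nat \<Rightarrow> (nat \<Rightarrow> nat \<Rightarrow> real) \<Rightarrow> real \<Rightarrow> (nat \<Rightarrow> nat \<Rightarrow> real) \<Rightarrow> (nat \<Rightarrow> nat \<Rightarrow> nat \<Rightarrow> real)
   \<Rightarrow> real \<Rightarrow> (rstate \<Rightarrow> real) \<Rightarrow> rstate \<Rightarrow> bool" where
  "opt_action M Q ps D g lam h s \<longleftrightarrow>
     Qval M Q ps D g lam h s True < Qval M Q ps D g lam h s False"

end

theory Submission
  imports Defs
begin

lemma Sspace_sub: "Sspace M Q \<subseteq> Xset M \<times> Xset M \<times> UNIV"
  unfolding Sspace_def Xap_def Xp_def by auto

lemma summ_bound:
  fixes f :: "rstate \<Rightarrow> real"
  assumes "\<And>s'. f s' \<noteq> 0 \<Longrightarrow> snd (snd s') \<le> B"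
  shows "f summable_on Sspace M Q"
proof -
  let ?F = "{s'\<in>Sspace M Q. f s' \<noteq> 0}"
  have "?F \<subseteq> Xset M \<times> Xset M \<times> {..B}"
    using Sspace_sub assms by fastforce
  hence fin: "finite ?F"
    by (rule finite_subset) (auto simp: Xset_def)
  have "f summable_on ?F" using fin by simp
  moreover have "f summable_on ?F \<longleftrightarrow> f summable_on Sspace M Q"
    by (rule summable_on_cong_neutral) auto
  ultimately show ?thesis by simp
qed

lemma infsum_point:
  fixes c :: real
  assumes "a \<in> A"
  shows "infsum (\<lambda>x. if x = a then c else 0) A = c"
proof -
  have "infsum (\<lambda>x. if x = a then c else 0) A = infsum (\<lambda>x. if x = a then c else 0) {a}"
    by (rule infsum_cong_neutral) (use assms in auto)
  also have "\<dots> = c" by simp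
  finally show ?thesis .
qed

lemma sync_supp: "sync_step Q i s' * x \<noteq> 0 \<Longrightarrow> snd (snd s') \<le> 1"
  unfolding sync_step_def by (auto split: prod.splits if_splits)

lemma idle_supp: "idle_step Q i j d s' * x \<noteq> 0 \<Longrightarrow> snd (snd s') \<le> Suc d"
  unfolding idle_step_def by (auto split: prod.splits if_splits)

definition idle0 :: "(nat \<Rightarrow> nat \<Rightarrow> real) \<Rightarrow> nat \<Rightarrow> nat \<Rightarrow> rstate \<Rightarrow> real" where
  "idle0 Q i j s' = (case s' of (i', j', d') \<Rightarrow>
     if j' = j then (if i' = j \<and> d' = 0 then Q i j
                     else if i' \<noteq> i \<and> i' \<noteq> j \<and> d' = 1 then Q i i' else 0)
     else 0)"

lemma idle0_supp: "idle0 Q i j s' * x \<noteq> 0 \<Longrightarrow> snd (snd s') \<le> 1"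
  unfolding idle0_def by (auto split: prod.splits if_splits)

lemma idle_decomp:
  assumes "i \<noteq> j"
  shows "idle_step Q i j d s' * x = (if s' = (i, j, Suc d) then Q i i * x else 0) + idle0 Q i j s' * x"
  using assms unfolding idle_step_def idle0_def by (auto split: prod.splits)

lemma idle_sum:
  fixes h :: "rstate \<Rightarrow> real"
  assumes "i \<noteq> j" "(i, j, Suc d) \<in> Sspace M Q"
  shows "(\<Sum>\<^sub>\<infinity>s'\<in>Sspace M Q. idle_step Q i j d s' * h s')
       = Q i i * h (i, j, Suc d) + (\<Sum>\<^sub>\<infinity>s'\<in>Sspace M Q. idle0 Q i j s' * h s')"
proof -
  have "(\<Sum>\<^sub>\<infinity>s'\<in>Sspace M Q. idle_step Q i j d s' * h s')
     = (\<Sum>\<^sub>\<infinity>s'\<in>Sspace M Q. (if s' = (i, j, Suc d) then Q i i * h (i, j, Suc d) else 0) + idle0 Q i j s' * h s')"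
    by (rule infsum_cong) (simp add: idle_decomp[OF assms(1)])
  also have "\<dots> = (\<Sum>\<^sub>\<infinity>s'\<in>Sspace M Q. (if s' = (i, j, Suc d) then Q i i * h (i, j, Suc d) else 0))
        + (\<Sum>\<^sub>\<infinity>s'\<in>Sspace M Q. idle0 Q i j s' * h s')"
    by (rule infsum_add) (rule summ_bound[where B = "Suc d"], auto split: if_splits,
        rule summ_bound[where B=1], rule idle0_supp)
  also have "\<dots> = Q i i * h (i, j, Suc d) + (\<Sum>\<^sub>\<infinity>s'\<in>Sspace M Q. idle0 Q i j s' * h s')"
    using infsum_point[OF assms(2)] by simp
  finally show ?thesis .
qed

lemma trans_true_sum:
  fixes h :: "rstate \<Rightarrow> real"
  assumes "i \<noteq> j"
  shows "(\<Sum>\<^sub>\<infinity>s'\<in>Sspace M Q. trans Q ps (i, j, d) s' True * h s')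
     = ps * (\<Sum>\<^sub>\<infinity>s'\<in>Sspace M Q. sync_step Q i s' * h s')
       + (1 - ps) * (\<Sum>\<^sub>\<infinity>s'\<in>Sspace M Q. idle_step Q i j d s' * h s')"
proof -
  have s1: "(\<lambda>s'. sync_step Q i s' * h s') summable_on Sspace M Q"
    by (rule summ_bound[where B=1], rule sync_supp)
  have s2: "(\<lambda>s'. idle_step Q i j d s' * h s') summable_on Sspace M Q"
    by (rule summ_bound[where B="Suc d"], rule idle_supp)
  have "(\<Sum>\<^sub>\<infinity>s'\<in>Sspace M Q. trans Q ps (i, j, d) s' True * h s')
     = (\<Sum>\<^sub>\<infinity>s'\<in>Sspace M Q. ps * (sync_step Q i s' * h s') + (1 - ps) * (idle_step Q i j d s' * h s'))"
    by (rule infsum_cong) (simp add: trans_def assms algebra_simps)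
  also have "\<dots> = (\<Sum>\<^sub>\<infinity>s'\<in>Sspace M Q. ps * (sync_step Q i s' * h s'))
       + (\<Sum>\<^sub>\<infinity>s'\<in>Sspace M Q. (1 - ps) * (idle_step Q i j d s' * h s'))"
    by (rule infsum_add) (auto intro: summable_on_cmult_right s1 s2)
  also have "\<dots> = ps * (\<Sum>\<^sub>\<infinity>s'\<in>Sspace M Q. sync_step Q i s' * h s')
       + (1 - ps) * (\<Sum>\<^sub>\<infinity>s'\<in>Sspace M Q. idle_step Q i j d s' * h s')"
    using s1 s2 by (simp add: infsum_cmult_right)
  finally show ?thesis .
qed

lemma phi_lip:
  fixes x y B ps :: real
  assumes "0 \<le> ps" "ps \<le> 1"
  shows "min x (B + (1 - ps) * x) - min y (B + (1 - ps) * y) \<le> max 0 (x - y)"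
proof (cases "x \<le> y")
  case True
  hence "(1 - ps) * x \<le> (1 - ps) * y" using assms by (simp add: mult_left_mono)
  thus ?thesis using True by linarith
next
  case False
  hence "(1 - ps) * (x - y) \<le> x - y" using assms
    by (simp add: mult_left_le_one_le)
  thus ?thesis using False by (simp add: algebra_simps)
qed

lemma mono_H:
  fixes H c :: "nat \<Rightarrow> real" and q R L B ps K :: real
  assumes ps: "0 \<le> ps" "ps \<le> 1" and q: "0 \<le> q" "q \<le> 1"
    and bell: "\<And>n. 1 \<le> n \<Longrightarrow> L + H n = c n + min (q * H (Suc n) + R) (B + (1 - ps) * (q * H (Suc n) + R))"
    and cm: "\<And>n. 1 \<le> n \<Longrightarrow> c n \<le> c (Suc n)"
    and lb: "\<And>n. 1 \<le> n \<Longrightarrow> K \<le> H n"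
    and d: "1 \<le> d"
  shows "H d \<le> H (Suc d)"
proof (rule ccontr)
  assume "\<not> H d \<le> H (Suc d)"
  define gap where "gap = H d - H (Suc d)"
  have gp: "gap > 0" using \<open>\<not> H d \<le> H (Suc d)\<close> unfolding gap_def by simp
  have step: "gap \<le> H (d + k) - H (Suc (d + k))" for k
  proof (induction k)
    case 0 then show ?case by (simp add: gap_def)
  next
    case (Suc k)
    define n where "n = d + k"
    have n1: "1 \<le> n" "1 \<le> Suc n" using d by (auto simp: n_def)
    define x where "x = q * H (Suc n) + R"
    define y where "y = q * H (Suc (Suc n)) + R"
    have e1: "L + H n = c n + min x (B + (1 - ps) * x)" using bell[OF n1(1)] by (simp add: x_def)
    have e2: "L + H (Suc n) = c (Suc n) + min y (B + (1 - ps) * y)" using bell[OF n1(2)] by (simp add: y_def)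
    have "H n - H (Suc n) \<le> max 0 (x - y)"
      using e1 e2 cm[OF n1(1)] phi_lip[OF ps, of x B y] by linarith
    moreover have "gap \<le> H n - H (Suc n)" using Suc.IH by (simp add: n_def)
    ultimately have g1: "gap \<le> x - y" using gp by linarith
    have xy: "x - y = q * (H (Suc n) - H (Suc (Suc n)))" by (simp add: x_def y_def algebra_simps)
    have pos: "H (Suc n) - H (Suc (Suc n)) > 0"
    proof (rule ccontr)
      assume "\<not> ?thesis"
      hence "q * (H (Suc n) - H (Suc (Suc n))) \<le> 0" using q by (simp add: mult_nonneg_nonpos)
      thus False using g1 xy gp by linarith
    qed
    have "q * (H (Suc n) - H (Suc (Suc n))) \<le> H (Suc n) - H (Suc (Suc n))"
      using q pos by (simp add: mult_left_le_one_le)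
    thus ?case using g1 xy by (simp add: n_def)
  qed
  have decr: "H (d + k) \<le> H d - real k * gap" for k
  proof (induction k)
    case 0 then show ?case by simp
  next
    case (Suc k)
    have "H (d + Suc k) = H (Suc (d + k))" by simp
    also have "\<dots> \<le> H (d + k) - gap" using step[of k] by linarith
    also have "\<dots> \<le> H d - real (Suc k) * gap" using Suc.IH by (simp add: algebra_simps)
    finally show ?case .
  qed
  obtain k :: nat where k: "(H d - K) / gap < real k" using reals_Archimedean2 by blast
  hence "H d - K < real k * gap" using gp by (simp add: divide_less_eq)
  moreover have "K \<le> H (d + k)" using lb d by simp
  ultimately show False using decr[of k] by linarith
qed

theorem theorem2:
  fixes M :: nat and Q :: "nat \<Rightarrow> nat \<Rightarrow> real" and ps lam L :: real
    and D :: "nat \<Rightarrow> nat \<Rightarrow> real" and g :: "nat \<Rightarrow> nat \<Rightarrow> nat \<Rightarrow> real"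
    and h :: "rstate \<Rightarrow> real"
  assumes Q_nonneg: "\<forall>i\<in>Xset M. \<forall>j\<in>Xset M. 0 \<le> Q i j"
    and Q_stoch: "\<forall>i\<in>Xset M. (\<Sum>j\<in>Xset M. Q i j) = 1"
    and Q_irred: "\<forall>i\<in>Xset M. \<forall>j\<in>Xset M.
                    (i, j) \<in> {(a, b). a \<in> Xset M \<and> b \<in> Xset M \<and> 0 < Q a b}\<^sup>*"
    and Xap_ne: "Xap M Q \<noteq> {}"
    and ps_range: "0 \<le> ps" "ps \<le> 1"
    and D_pos: "\<forall>i\<in>Xset M. \<forall>j\<in>Xset M. i \<noteq> j \<longrightarrow> 0 < D i j"
    and g_nonneg: "\<forall>i\<in>Xset M. \<forall>j\<in>Xset M. i \<noteq> j \<longrightarrow> (\<forall>d\<ge>1. 0 \<le> g i j d)"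
    and g_mono: "\<forall>i\<in>Xset M. \<forall>j\<in>Xset M. i \<noteq> j \<longrightarrow>
                   (\<forall>d d'. 1 \<le> d \<longrightarrow> d \<le> d' \<longrightarrow> g i j d \<le> g i j d')"
    and lam_nonneg: "0 \<le> lam"
    and L_opt: "\<forall>s1\<in>Sspace M Q. opt_cost M Q ps D g lam s1 = ereal L"
    and bellman: "\<forall>s\<in>Sspace M Q.
                    L + h s = min (Qval M Q ps D g lam h s False) (Qval M Q ps D g lam h s True)"
    and h_bdd_below: "\<exists>K. \<forall>s\<in>Sspace M Q. K \<le> h s"
  shows "(\<forall>i\<in>Xset M. \<not> opt_action M Q ps D g lam h (i, i, 0)) \<and>
         (\<forall>i\<in>Xset M. \<forall>j\<in>Xset M. i \<noteq> j \<longrightarrow>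
            (\<exists>\<tau>::enat. 1 \<le> \<tau> \<and>
               (\<forall>d. (i, j, d) \<in> Sspace M Q \<longrightarrow>
                    (opt_action M Q ps D g lam h (i, j, d) \<longleftrightarrow> \<tau> \<le> enat d))))"
proof -
  have Xap_sub: "Xap M Q \<subseteq> Xset M" unfolding Xap_def by auto
  obtain K where K: "\<forall>s\<in>Sspace M Q. K \<le> h s" using h_bdd_below by blast
  have part1: "\<not> opt_action M Q ps D g lam h (i, i, 0)" for i
    using lam_nonneg unfolding opt_action_def Qval_def stage_cost_def trans_def by simp
  have part2: "\<exists>\<tau>::enat. 1 \<le> \<tau> \<and>
               (\<forall>d. (i, j, d) \<in> Sspace M Q \<longrightarrow>
                    (opt_action M Q ps D g lam h (i, j, d) \<longleftrightarrow> \<tau> \<le> enat d))"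
    if ij: "i \<in> Xset M" "j \<in> Xset M" "i \<noteq> j" for i j
  proof (cases "0 < Q i i")
    case False
    hence mem: "(i, j, d) \<in> Sspace M Q \<Longrightarrow> d = 1" for d
      unfolding Sspace_def Xap_def using ij by auto
    show ?thesis
    proof (cases "opt_action M Q ps D g lam h (i, j, 1)")
      case True
      show ?thesis by (rule exI[of _ 1]) (use True mem in \<open>auto simp: one_enat_def\<close>)
    next
      case False
      show ?thesis by (rule exI[of _ \<infinity>]) (use False mem in auto)
    qed
  next
    case True
    hence iap: "i \<in> Xap M Q" using ij unfolding Xap_def by auto
    have memI: "1 \<le> d \<Longrightarrow> (i, j, d) \<in> Sspace M Q" for d
      unfolding Sspace_def using iap ij by auto
    have memD: "(i, j, d) \<in> Sspace M Q \<Longrightarrow> 1 \<le> d" for d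
      unfolding Sspace_def using ij by auto
    define S where "S = (\<Sum>\<^sub>\<infinity>s'\<in>Sspace M Q. sync_step Q i s' * h s')"
    define R where "R = (\<Sum>\<^sub>\<infinity>s'\<in>Sspace M Q. idle0 Q i j s' * h s')"
    define H where "H n = h (i, j, n)" for n
    define c where "c n = cost D g (i, j, n)" for n
    define q where "q = Q i i"
    define B where "B = lam + ps * S"
    have isum: "(\<Sum>\<^sub>\<infinity>s'\<in>Sspace M Q. idle_step Q i j d s' * h s') = q * H (Suc d) + R" for d
      unfolding q_def H_def R_def by (rule idle_sum) (use ij memI in auto)
    have QF: "Qval M Q ps D g lam h (i, j, d) False = c d + (q * H (Suc d) + R)" for d
    proof -
      have "(\<Sum>\<^sub>\<infinity>s'\<in>Sspace M Q. trans Q ps (i, j, d) s' False * h s')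
          = (\<Sum>\<^sub>\<infinity>s'\<in>Sspace M Q. idle_step Q i j d s' * h s')"
        by (rule infsum_cong) (simp add: trans_def ij)
      thus ?thesis unfolding Qval_def stage_cost_def c_def using isum by simp
    qed
    have QT: "Qval M Q ps D g lam h (i, j, d) True = c d + (B + (1 - ps) * (q * H (Suc d) + R))" for d
      unfolding Qval_def stage_cost_def c_def B_def S_def
      using trans_true_sum[OF ij(3), where M=M and Q=Q and ps=ps and d=d and h=h] isum[of d] by simp
    have opt_iff: "opt_action M Q ps D g lam h (i, j, d) \<longleftrightarrow>
        B + (1 - ps) * (q * H (Suc d) + R) < q * H (Suc d) + R" for d
      unfolding opt_action_def QF QT by simp
    have bell: "L + H n = c n + min (q * H (Suc n) + R) (B + (1 - ps) * (q * H (Suc n) + R))"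
      if "1 \<le> n" for n
    proof -
      have "L + H n = min (Qval M Q ps D g lam h (i, j, n) False) (Qval M Q ps D g lam h (i, j, n) True)"
        using bellman memI[OF that] by (auto simp: H_def)
      thus ?thesis unfolding QF QT by (simp add: min_def)
    qed
    have q01: "0 \<le> q" "q \<le> 1"
    proof -
      show "0 \<le> q" using True q_def by simp
      have "Q i i \<le> (\<Sum>j\<in>Xset M. Q i j)"
        by (rule member_le_sum) (use ij Q_nonneg in \<open>auto simp: Xset_def\<close>)
      thus "q \<le> 1" using Q_stoch ij by (simp add: q_def)
    qed
    have cm: "c n \<le> c (Suc n)" if "1 \<le> n" for n
    proof -
      have "g i j n \<le> g i j (Suc n)" using g_mono ij that by auto
      thus ?thesis unfolding c_def cost_def using D_pos ij
        by (simp add: mult_left_mono less_imp_le)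
    qed
    have lb: "K \<le> H n" if "1 \<le> n" for n
      using K memI[OF that] unfolding H_def by auto
    have Hm: "H n \<le> H (Suc n)" if "1 \<le> n" for n
      by (rule mono_H[where H=H and c=c and L=L and q=q and R=R and B=B and ps=ps and K=K, OF ps_range q01 bell cm lb that])
    have optm: "opt_action M Q ps D g lam h (i, j, Suc n)"
      if "1 \<le> n" "opt_action M Q ps D g lam h (i, j, n)" for n
    proof -
      have "q * H (Suc n) \<le> q * H (Suc (Suc n))" using Hm[of "Suc n"] q01 that
        by (simp add: mult_left_mono)
      hence "ps * (q * H (Suc n)) \<le> ps * (q * H (Suc (Suc n)))" using ps_range
        by (simp add: mult_left_mono)
      thus ?thesis using that(2) unfolding opt_iff by (simp add: algebra_simps)
    qed
    have optm2: "opt_action M Q ps D g lam h (i, j, m)"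
      if "1 \<le> n" "n \<le> m" "opt_action M Q ps D g lam h (i, j, n)" for n m
      using that(2,1,3)
    proof (induction m rule: dec_induct)
      case base then show ?case by simp
    next
      case (step m) then show ?case using optm[of m] by simp
    qed
    show ?thesis
    proof (cases "\<exists>d\<ge>1. opt_action M Q ps D g lam h (i, j, d)")
      case True
      define n where "n = (LEAST d. 1 \<le> d \<and> opt_action M Q ps D g lam h (i, j, d))"
      have n: "1 \<le> n" "opt_action M Q ps D g lam h (i, j, n)"
        using LeastI_ex[OF True[unfolded Bex_def]] unfolding n_def by auto
      have nle: "1 \<le> d \<Longrightarrow> opt_action M Q ps D g lam h (i, j, d) \<Longrightarrow> n \<le> d" for d
        unfolding n_def by (rule Least_le) simp
      show ?thesis
      proof (rule exI[of _ "enat n"], intro conjI allI impI)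
        show "1 \<le> enat n" using n by (simp add: one_enat_def)
        fix d assume "(i, j, d) \<in> Sspace M Q"
        hence d1: "1 \<le> d" by (rule memD)
        show "opt_action M Q ps D g lam h (i, j, d) \<longleftrightarrow> enat n \<le> enat d"
          using nle[OF d1] optm2[OF n(1) _ n(2)] by auto
      qed
    next
      case False
      show ?thesis by (rule exI[of _ \<infinity>]) (use False memD in auto)
    qed
  qed
  show ?thesis using part1 part2 by blast
qed

end
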